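(* Let $A$ and $d$ be positive integers with $d<A-1$, and let $r$ be the maximum number of distinct preferences over $A$ alternatives that are simultaneously representable in a $d$-dimensional Euclidean preference model. Let $\ell$ be the number of unique preferences in a given profile and suppose $\ell\geq r$. Label the alternatives $a_1,\dots,a_A$, let $M=A-d$, and for $n\in\{1,\dots,M-1\}$ let $E_n$ be the event that a uniformly random strict ordering of $a_1,\dots,a_A$ places $a_n$ within its first $M-n$ positions. Let $C=\bigcup_{n=1}^{M-1} E_n$. Then $$r \leq \hat{r} = \left(1-\mathbb{P}(C)\right) A!.$$
   Context: A preference is a strict total order on the alternatives. A set of preferences $\{>_1,\dots,>_m\}$ over alternatives $a_1,\dots,a_A$ is simultaneously representable in a $d$-dimensional Euclidean preference model if there exist points $x^{a}\in\mathbb{R}^d$ for each alternative $a$ and $w^{i}\in\mathbb{R}^d$ for each $i\in\{1,\dots,m\}$ such that for all alternatives $a,b$ and all $i$, $a>_i b \iff \|x^a-w^i\|<\|x^b-w^i\|$ (standard Euclidean norm). A profile is an assignment of preferences to a population of individuals; its number of unique preferences is the number of distinct preferences it contains. *)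

theory Defs
  imports "HOL-Probability.Probability_Mass_Function"
begin

text \<open>Alternatives are labelled 1..A (alternative a_n is the number n).
A preference is a strict total order on {1..A}, given as a relation R with
(a,b) in R meaning a is strictly preferred to b.\<close>

definition prefs :: "nat \<Rightarrow> nat rel set" where
  "prefs A = {R. R \<subseteq> {1..A} \<times> {1..A} \<and> strict_linear_order_on {1..A} R}"

text \<open>Euclidean distance in R^d, points given as functions nat => real
(only coordinates 0..d-1 are relevant).\<close>
definition edist :: "nat \<Rightarrow> (nat \<Rightarrow> real) \<Rightarrow> (nat \<Rightarrow> real) \<Rightarrow> real" where
  "edist d x y = sqrt (\<Sum>i<d. (x i - y i)^2)"

definition representable :: "nat \<Rightarrow> nat \<Rightarrow> nat rel set \<Rightarrow> bool" where
  "representable d A S \<longleftrightarrow>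
     (\<exists>(x :: nat \<Rightarrow> nat \<Rightarrow> real) (w :: nat rel \<Rightarrow> nat \<Rightarrow> real).
        \<forall>R\<in>S. \<forall>a\<in>{1..A}. \<forall>b\<in>{1..A}.
          ((a, b) \<in> R \<longleftrightarrow> edist d (x a) (w R) < edist d (x b) (w R)))"

definition max_repr :: "nat \<Rightarrow> nat \<Rightarrow> nat" where
  "max_repr d A = Max {card S | S. S \<subseteq> prefs A \<and> representable d A S}"

definition position :: "nat rel \<Rightarrow> nat \<Rightarrow> nat" where
  "position R a = card {b. (b, a) \<in> R} + 1"

definition event_C :: "nat \<Rightarrow> nat \<Rightarrow> nat rel set" where
  "event_C A d = {R \<in> prefs A. \<exists>n\<in>{1..A - d - 1}. position R n \<le> (A - d) - n}"

end

theory Submission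
  imports Defs "HOL-Combinatorics.Permutations" "HOL-Combinatorics.Multiset_Permutations"
begin


definition val :: "nat set \<Rightarrow> ('a \<Rightarrow> real) \<Rightarrow> ('a \<Rightarrow> nat \<Rightarrow> real) \<Rightarrow> 'a \<Rightarrow> (nat \<Rightarrow> real) \<Rightarrow> real" where
  "val D cst coef a w = cst a + (\<Sum>i\<in>D. coef a i * w i)"

definition ordr :: "'a set \<Rightarrow> ('a \<Rightarrow> real) \<Rightarrow> 'a rel" where
  "ordr X v = {(a,b). a \<in> X \<and> b \<in> X \<and> v a < v b}"

definition realized :: "'a set \<Rightarrow> nat set \<Rightarrow> ('a \<Rightarrow> real) \<Rightarrow> ('a \<Rightarrow> nat \<Rightarrow> real) \<Rightarrow> 'a rel set" where
  "realized X D cst coef = {ordr X (\<lambda>a. val D cst coef a w) | w. inj_on (\<lambda>a. val D cst coef a w) X}"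

fun Q :: "nat \<Rightarrow> nat \<Rightarrow> nat" where
  "Q 0 d = 1"
| "Q (Suc n) 0 = 1"
| "Q (Suc n) (Suc d) = Q n (Suc d) + n * Q n d"

lemma realized_finite: "finite X \<Longrightarrow> finite (realized X D cst coef)"
proof -
  assume "finite X"
  have "realized X D cst coef \<subseteq> Pow (X \<times> X)" unfolding realized_def ordr_def by auto
  thus ?thesis using \<open>finite X\<close> by (meson finite_Pow_iff finite_SigmaI rev_finite_subset)
qed

lemma val_comb:
  "val D cst coef a (\<lambda>i. (1 - t) * w1 i + t * w2 i) = (1 - t) * val D cst coef a w1 + t * val D cst coef a w2"
proof -
  have "(\<Sum>i\<in>D. coef a i * ((1 - t) * w1 i + t * w2 i)) = (1 - t) * (\<Sum>i\<in>D. coef a i * w1 i) + t * (\<Sum>i\<in>D. coef a i * w2 i)"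
    by (simp add: sum_distrib_left sum.distrib[symmetric] algebra_simps)
  thus ?thesis unfolding val_def by (simp add: algebra_simps)
qed

lemma comb_less:
  fixes t :: real
  assumes "0 \<le> t" "t \<le> 1" "a1 < b1" "a2 < b2"
  shows "(1 - t) * a1 + t * a2 < (1 - t) * b1 + t * b2"
proof (cases "t = 0")
  case True thus ?thesis using assms by simp
next
  case False
  hence "t * a2 < t * b2" using assms by simp
  moreover have "(1 - t) * a1 \<le> (1 - t) * b1" using assms by (simp add: mult_left_mono)
  ultimately show ?thesis by linarith
qed

lemma crossing:
  fixes D :: "nat set" and cst :: "'a \<Rightarrow> real" and coef :: "'a \<Rightarrow> nat \<Rightarrow> real" and v :: "(nat \<Rightarrow> real) \<Rightarrow> 'a \<Rightarrow> real"
  defines "v \<equiv> \<lambda>w a. val D cst coef a w"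
  assumes i1: "inj_on (v wa) X" and i2: "inj_on (v wb) X"
    and o: "ordr X (v wa) = ordr X (v wb)"
    and ga: "v wa e < v wa b" and gb: "v wb b < v wb e"
  shows "\<exists>w. inj_on (v w) X \<and> ordr X (v w) = ordr X (v wa) \<and> v w e = v w b"
proof -
  define ga where "ga = v wa b - v wa e"
  define gb where "gb = v wb b - v wb e"
  have "ga > 0" "gb < 0" using assms unfolding ga_def gb_def by auto
  define t where "t = ga / (ga - gb)"
  have t0: "0 \<le> t" and t1: "t \<le> 1" using \<open>ga > 0\<close> \<open>gb < 0\<close> unfolding t_def by (auto simp: field_simps)
  define w where "w = (\<lambda>i. (1 - t) * wa i + t * wb i)"
  have vw: "v w a = (1 - t) * v wa a + t * v wb a" for a
    unfolding w_def v_def by (rule val_comb)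
  have "(1 - t) * ga + t * gb = 0"
    using \<open>ga > 0\<close> \<open>gb < 0\<close> unfolding t_def by (simp add: field_simps)
  hence eb: "v w e = v w b" unfolding vw ga_def gb_def by (simp add: algebra_simps)
  have lt: "v w a < v w c" if "a \<in> X" "c \<in> X" "v wa a < v wa c" for a c
  proof -
    have "(a,c) \<in> ordr X (v wb)" using that o unfolding ordr_def by blast
    hence "v wb a < v wb c" unfolding ordr_def by auto
    thus ?thesis unfolding vw using comb_less[OF t0 t1 that(3)] by blast
  qed
  have inj: "inj_on (v w) X"
  proof (rule inj_onI)
    fix a c assume ac: "a \<in> X" "c \<in> X" "v w a = v w c"
    show "a = c"
    proof (rule ccontr)
      assume "a \<noteq> c"
      hence "v wa a \<noteq> v wa c" using i1 ac by (meson inj_on_contraD)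
      hence "v wa a < v wa c \<or> v wa c < v wa a" by linarith
      thus False using lt[of a c] lt[of c a] ac by auto
    qed
  qed
  have "ordr X (v w) = ordr X (v wa)"
  proof (rule set_eqI, clarify)
    fix a c
    show "((a,c) \<in> ordr X (v w)) = ((a,c) \<in> ordr X (v wa))"
    proof
      assume h: "(a,c) \<in> ordr X (v w)"
      hence ac: "a \<in> X" "c \<in> X" "v w a < v w c" unfolding ordr_def by auto
      hence "a \<noteq> c" by auto
      hence "v wa a \<noteq> v wa c" using i1 ac by (meson inj_on_contraD)
      moreover have "\<not> v wa c < v wa a" using lt[of c a] ac by auto
      ultimately show "(a,c) \<in> ordr X (v wa)" using ac unfolding ordr_def by auto
    next
      assume "(a,c) \<in> ordr X (v wa)"
      thus "(a,c) \<in> ordr X (v w)" using lt unfolding ordr_def by auto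
    qed
  qed
  thus ?thesis using inj eb by blast
qed

lemma restrict_hyp:
  assumes "i0 \<in> D" "finite D" "coef e i0 \<noteq> coef b i0"
  shows "\<exists>cst' coef'. \<forall>w. val D cst coef e w = val D cst coef b w \<longrightarrow>
            (\<forall>a. val (D - {i0}) cst' coef' a w = val D cst coef a w)"
proof -
  define m where "m = (\<lambda>i. coef e i - coef b i)"
  define c0 where "c0 = cst e - cst b"
  have m0: "m i0 \<noteq> 0" using assms unfolding m_def by simp
  define cst' where "cst' = (\<lambda>a. cst a - coef a i0 * c0 / m i0)"
  define coef' where "coef' = (\<lambda>a i. coef a i - coef a i0 * m i / m i0)"
  have split: "(\<Sum>i\<in>D. f i) = f i0 + (\<Sum>i\<in>D - {i0}. f i)" for f :: "nat \<Rightarrow> real"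
    using assms(1,2) by (simp add: sum.remove)
  have "\<forall>w. val D cst coef e w = val D cst coef b w \<longrightarrow>
            (\<forall>a. val (D - {i0}) cst' coef' a w = val D cst coef a w)"
  proof (intro allI impI)
    fix w a
    assume h: "val D cst coef e w = val D cst coef b w"
    have "c0 + (\<Sum>i\<in>D. m i * w i) = 0"
      using h unfolding val_def c0_def m_def by (simp add: algebra_simps sum_subtractf)
    hence h2: "c0 + (\<Sum>i\<in>D - {i0}. m i * w i) = - m i0 * w i0" using split[of "\<lambda>i. m i * w i"] by simp
    have "val (D - {i0}) cst' coef' a w
        = cst a + (\<Sum>i\<in>D - {i0}. coef a i * w i) - coef a i0 * (c0 + (\<Sum>i\<in>D - {i0}. m i * w i)) / m i0"
      unfolding val_def cst'_def coef'_def
      by (simp add: algebra_simps sum_subtractf sum_distrib_left sum_divide_distrib add_divide_distrib diff_divide_distrib)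
    also have "\<dots> = cst a + (\<Sum>i\<in>D - {i0}. coef a i * w i) + coef a i0 * w i0"
      unfolding h2 using m0 by (simp add: field_simps)
    also have "\<dots> = val D cst coef a w" unfolding val_def using split[of "\<lambda>i. coef a i * w i"] by simp
    finally show "val (D - {i0}) cst' coef' a w = val D cst coef a w" .
  qed
  thus ?thesis by blast
qed

lemma finite_max_elem:
  fixes f :: "'a \<Rightarrow> real"
  assumes "finite K" "K \<noteq> {}"
  shows "\<exists>b\<in>K. \<forall>c\<in>K. f c \<le> f b"
proof -
  have "Max (f ` K) \<in> f ` K" using assms by simp
  then obtain b where "b \<in> K" "f b = Max (f ` K)" by force
  moreover have "\<forall>c\<in>K. f c \<le> Max (f ` K)" using assms by simp
  ultimately show ?thesis by metis
qed

lemma fiber_bound: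
  fixes D :: "nat set" and cst :: "'a \<Rightarrow> real" and coef :: "'a \<Rightarrow> nat \<Rightarrow> real"
    and v :: "(nat \<Rightarrow> real) \<Rightarrow> 'a \<Rightarrow> real"
  defines "v \<equiv> \<lambda>w a. val D cst coef a w"
  assumes fin: "finite X" and eX: "e \<in> X" and tau: "\<tau> \<in> realized (X - {e}) D cst coef"
  shows "card {R \<in> realized X D cst coef. R \<inter> ((X-{e}) \<times> (X-{e})) = \<tau>}
         \<le> 1 + card {b \<in> X - {e}. \<exists>w. inj_on (v w) (X-{e}) \<and> ordr (X-{e}) (v w) = \<tau> \<and> v w e = v w b}"
proof -
  define X' where "X' = X - {e}"
  define fib where "fib = {R \<in> realized X D cst coef. R \<inter> (X' \<times> X') = \<tau>}"
  define hits where "hits = {b \<in> X'. \<exists>w. inj_on (v w) X' \<and> ordr X' (v w) = \<tau> \<and> v w e = v w b}"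
  define kf where "kf = (\<lambda>R. {b \<in> X'. (b, e) \<in> R})"
  have XX: "X = insert e X'" "e \<notin> X'" "X' \<subseteq> X" using eX unfolding X'_def by auto
  have finX': "finite X'" using fin XX by auto
  have fibD: "\<exists>w. inj_on (v w) X \<and> R = ordr X (v w) \<and> ordr X' (v w) = \<tau>" if hR: "R \<in> fib" for R
  proof -
    obtain w where w: "inj_on (v w) X" "R = ordr X (v w)" "R \<inter> (X' \<times> X') = \<tau>"
      using hR unfolding fib_def realized_def v_def by blast
    have "R \<inter> (X' \<times> X') = ordr X' (v w)" unfolding w(2) ordr_def using XX by auto
    thus ?thesis using w by auto
  qed
  have Rform: "R = \<tau> \<union> (\<lambda>b. (b,e)) ` kf R \<union> (\<lambda>b. (e,b)) ` (X' - kf R)" if hR: "R \<in> fib" for R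
  proof -
    obtain w where w: "inj_on (v w) X" "R = ordr X (v w)" "ordr X' (v w) = \<tau>" using fibD[OF hR] by blast
    have ne: "v w b \<noteq> v w e" if "b \<in> X'" for b
      using w(1) that XX by (metis inj_on_contraD insert_iff)
    show ?thesis
    proof (rule set_eqI, clarify)
      fix a c
      show "((a,c) \<in> R) = ((a,c) \<in> \<tau> \<union> (\<lambda>b. (b,e)) ` kf R \<union> (\<lambda>b. (e,b)) ` (X' - kf R))"
        unfolding kf_def w(3)[symmetric] w(2) ordr_def using XX ne by (auto; force)
    qed
  qed
  have injk: "inj_on kf fib"
    by (rule inj_onI) (metis Rform)
  define K where "K = kf ` fib"
  have cardfib: "card fib = card K" unfolding K_def using injk by (simp add: card_image)
  obtain w0 where w0: "inj_on (v w0) X'" "\<tau> = ordr X' (v w0)"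
    using tau unfolding realized_def v_def X'_def by auto
  have Kprop: "\<exists>w. inj_on (v w) X \<and> ordr X' (v w) = \<tau> \<and> \<kappa> = {b \<in> X'. v w b < v w e}" if hk: "\<kappa> \<in> K" for \<kappa>
  proof -
    obtain R where R: "R \<in> fib" "\<kappa> = kf R" using hk unfolding K_def by auto
    obtain w where w: "inj_on (v w) X" "R = ordr X (v w)" "ordr X' (v w) = \<tau>" using fibD[OF R(1)] by blast
    have "\<kappa> = {b \<in> X'. v w b < v w e}" unfolding R(2) kf_def w(2) ordr_def using XX by auto
    thus ?thesis using w by blast
  qed
  have Ksub: "\<kappa> \<subseteq> X'" if "\<kappa> \<in> K" for \<kappa> using Kprop[OF that] by auto
  have down: "c \<in> \<kappa>" if hk: "\<kappa> \<in> K" "b \<in> \<kappa>" "c \<in> X'" "v w0 c < v w0 b" for \<kappa> b c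
  proof -
    obtain w where w: "inj_on (v w) X" "ordr X' (v w) = \<tau>" "\<kappa> = {b \<in> X'. v w b < v w e}"
      using Kprop[OF hk(1)] by blast
    have "b \<in> X'" using that w by auto
    hence "(c,b) \<in> \<tau>" using that w0 unfolding ordr_def by auto
    hence "v w c < v w b" using w(2) unfolding ordr_def by auto
    thus ?thesis using that w by auto
  qed
  have w0ne: "v w0 b \<noteq> v w0 c" if "b \<in> X'" "c \<in> X'" "b \<noteq> c" for b c
    using w0(1) that by (meson inj_on_contraD)
  have chain: "\<kappa>1 \<subseteq> \<kappa>2 \<or> \<kappa>2 \<subseteq> \<kappa>1" if "\<kappa>1 \<in> K" "\<kappa>2 \<in> K" for \<kappa>1 \<kappa>2
  proof (rule ccontr)
    assume "\<not> ?thesis"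
    then obtain b c where bc: "b \<in> \<kappa>1" "b \<notin> \<kappa>2" "c \<in> \<kappa>2" "c \<notin> \<kappa>1" by blast
    have X: "b \<in> X'" "c \<in> X'" using bc Ksub that by auto
    have "b \<noteq> c" using bc by auto
    hence "v w0 b < v w0 c \<or> v w0 c < v w0 b" using w0ne[OF X] by linarith
    thus False using down[OF that(1) bc(1) X(2)] down[OF that(2) bc(3) X(1)] bc by auto
  qed
  have finK: "finite K" using Ksub finX' by (meson Pow_iff finite_Pow_iff rev_finite_subset subsetI)
  have finhits: "finite hits" unfolding hits_def using finX' by auto
  show ?thesis
  proof (cases "K = {}")
    case True
    thus ?thesis using cardfib unfolding fib_def X'_def by simp
  next
    case False
    obtain \<kappa>m where km: "\<kappa>m \<in> K" "card \<kappa>m = Min (card ` K)"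
      using False finK by (metis (mono_tags, opaque_lifting) Min_in empty_is_image finite_imageI imageE)
    have kmin: "\<kappa>m \<subseteq> \<kappa>" if "\<kappa> \<in> K" for \<kappa>
    proof -
      have "card \<kappa>m \<le> card \<kappa>" using km that finK by simp
      moreover have "finite \<kappa>m" using Ksub[OF km(1)] finX' finite_subset by blast
      ultimately show ?thesis using chain[OF km(1) that]
        by (metis card_seteq)
    qed
    define top where "top = (\<lambda>\<kappa>. SOME b. b \<in> \<kappa> \<and> (\<forall>c\<in>\<kappa>. v w0 c \<le> v w0 b))"
    have topP: "top \<kappa> \<in> \<kappa> \<and> (\<forall>c\<in>\<kappa>. v w0 c \<le> v w0 (top \<kappa>))" if "\<kappa> \<in> K - {\<kappa>m}" for \<kappa>
    proof -
      have "\<kappa> \<noteq> {}" using that kmin by auto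
      moreover have "finite \<kappa>" using that Ksub finX' finite_subset by blast
      ultimately have "\<exists>b. b \<in> \<kappa> \<and> (\<forall>c\<in>\<kappa>. v w0 c \<le> v w0 b)" using finite_max_elem by blast
      thus ?thesis unfolding top_def by (rule someI_ex)
    qed
    have topbelow: "c = top \<kappa> \<or> v w0 c < v w0 (top \<kappa>)" if "\<kappa> \<in> K - {\<kappa>m}" "c \<in> \<kappa>" for \<kappa> c
    proof -
      have "top \<kappa> \<in> X'" "c \<in> X'" using topP[OF that(1)] that Ksub by auto
      thus ?thesis using w0ne topP[OF that(1)] that(2) by force
    qed
    have injtop: "inj_on top (K - {\<kappa>m})"
    proof (rule inj_onI, rule ccontr)
      fix \<kappa>1 \<kappa>2 assume h: "\<kappa>1 \<in> K - {\<kappa>m}" "\<kappa>2 \<in> K - {\<kappa>m}" "top \<kappa>1 = top \<kappa>2" "\<kappa>1 \<noteq> \<kappa>2"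
      have gen: False if a: "\<kappa>a \<in> K - {\<kappa>m}" "\<kappa>b \<in> K - {\<kappa>m}" "top \<kappa>a = top \<kappa>b" "\<kappa>a \<subset> \<kappa>b" for \<kappa>a \<kappa>b
      proof -
        obtain c where c: "c \<in> \<kappa>b" "c \<notin> \<kappa>a" using a(4) by blast
        have "c \<noteq> top \<kappa>a" using topP[OF a(1)] c by auto
        hence "v w0 c < v w0 (top \<kappa>a)" using topbelow[OF a(2) c(1)] a(3) by auto
        thus False using down[of \<kappa>a "top \<kappa>a" c] topP[OF a(1)] a c Ksub by auto
      qed
      show False using chain[of \<kappa>1 \<kappa>2] h gen[of \<kappa>1 \<kappa>2] gen[of \<kappa>2 \<kappa>1] by auto
    qed
    have tophits: "top \<kappa> \<in> hits" if hk: "\<kappa> \<in> K - {\<kappa>m}" for \<kappa>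
    proof -
      define b where "b = top \<kappa>"
      have bk: "b \<in> \<kappa>" and bX: "b \<in> X'" using topP[OF that] Ksub that unfolding b_def by auto
      have "b \<notin> \<kappa>m"
      proof
        assume "b \<in> \<kappa>m"
        hence "\<kappa> \<subseteq> \<kappa>m" using topbelow[OF that] down[OF km(1), of b] Ksub that unfolding b_def by blast
        thus False using kmin that by auto
      qed
      obtain w1 where w1: "inj_on (v w1) X" "ordr X' (v w1) = \<tau>" "\<kappa>m = {b \<in> X'. v w1 b < v w1 e}"
        using Kprop[OF km(1)] by blast
      obtain w2 where w2: "inj_on (v w2) X" "ordr X' (v w2) = \<tau>" "\<kappa> = {b \<in> X'. v w2 b < v w2 e}"
        using Kprop hk by blast
      have "v w1 b \<noteq> v w1 e" using w1(1) bX XX by (metis inj_on_contraD insert_iff)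
      hence g1: "v w1 e < v w1 b" using \<open>b \<notin> \<kappa>m\<close> w1(3) bX by auto
      have g2: "v w2 b < v w2 e" using bk w2(3) by auto
      have i1: "inj_on (v w1) X'" "inj_on (v w2) X'" using w1(1) w2(1) XX inj_on_subset by blast+
      obtain w where "inj_on (v w) X' \<and> ordr X' (v w) = ordr X' (v w1) \<and> v w e = v w b"
        using crossing[where D=D and cst=cst and coef=coef and X=X' and wa=w1 and wb=w2 and e=e and b=b] i1 w1(2) w2(2) g1 g2 unfolding v_def by blast
      thus ?thesis unfolding hits_def b_def[symmetric] using bX w1(2) by auto
    qed
    have "card (K - {\<kappa>m}) \<le> card hits"
      using card_inj_on_le[OF injtop _ finhits] tophits by blast
    moreover have "card K = card (K - {\<kappa>m}) + 1" using km(1) finK False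
      by (simp add: card_Diff_singleton_if card_gt_0_iff)
    ultimately show ?thesis using cardfib unfolding fib_def hits_def X'_def by simp
  qed
qed

lemma sum_card_swap:
  assumes "finite A" "finite B"
  shows "(\<Sum>a\<in>A. card {b\<in>B. P a b}) = (\<Sum>b\<in>B. card {a\<in>A. P a b})"
proof -
  have c1: "card {b\<in>B. P a b} = (\<Sum>b\<in>B. if P a b then 1 else 0)" for a
    using assms(2) by (simp add: sum.inter_filter[symmetric])
  have c2: "card {a\<in>A. P a b} = (\<Sum>a\<in>A. if P a b then 1 else 0)" for b
    using assms(1) by (simp add: sum.inter_filter[symmetric])
  show ?thesis unfolding c1 c2 by (rule sum.swap)
qed

lemma main_bound:
  "finite X \<Longrightarrow> finite D \<Longrightarrow> card (realized X D cst coef) \<le> Q (card X) (card D)"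
proof (induction "card X" arbitrary: X D cst coef)
  case 0
  hence "X = {}" by simp
  hence "realized X D cst coef \<subseteq> {{}}" unfolding realized_def ordr_def by auto
  hence "card (realized X D cst coef) \<le> card {{}::'a rel}" by (intro card_mono) auto
  thus ?case using \<open>X = {}\<close> by simp
next
  case (Suc n)
  obtain e where eX: "e \<in> X" using Suc(2) by fastforce
  define X' where "X' = X - {e}"
  have cX': "card X' = n" using Suc(2) eX unfolding X'_def by simp
  have finX': "finite X'" using Suc(3) unfolding X'_def by simp
  show ?case
  proof (cases "D = {}")
    case True
    hence "realized X D cst coef \<subseteq> {ordr X cst}" unfolding realized_def val_def by auto
    hence "card (realized X D cst coef) \<le> card {ordr X cst}" by (intro card_mono) auto
    thus ?thesis using True Suc(2)[symmetric] by simp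
  next
    case False
    then obtain d' where cD: "card D = Suc d'" using Suc(4) by (metis card_0_eq not0_implies_Suc)
    define v where "v = (\<lambda>w a. val D cst coef a w)"
    show ?thesis
    proof (cases "\<exists>b\<in>X'. \<forall>w. v w e = v w b")
      case True
      then obtain b where b: "b \<in> X'" "\<forall>w. v w e = v w b" by blast
      have "realized X D cst coef = {}"
      proof -
        have "\<not> inj_on (v w) X" for w using b eX unfolding X'_def by (metis DiffD1 DiffD2 inj_on_def singletonI)
        thus ?thesis unfolding realized_def v_def by auto
      qed
      thus ?thesis by simp
    next
      case False
      define Rs where "Rs = realized X D cst coef"
      define Rs' where "Rs' = realized X' D cst coef"
      define fib where "fib = (\<lambda>\<tau>. {R \<in> Rs. R \<inter> (X' \<times> X') = \<tau>})"
      define P where "P = (\<lambda>\<tau> b. \<exists>w. inj_on (v w) X' \<and> ordr X' (v w) = \<tau> \<and> v w e = v w b)"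
      have finRs: "finite Rs" "finite Rs'" unfolding Rs_def Rs'_def using realized_finite Suc(3) finX' by auto
      have U: "Rs = (\<Union>\<tau>\<in>Rs'. fib \<tau>)"
      proof
        show "Rs \<subseteq> (\<Union>\<tau>\<in>Rs'. fib \<tau>)"
        proof
          fix R assume "R \<in> Rs"
          then obtain w where w: "inj_on (v w) X" "R = ordr X (v w)" unfolding Rs_def realized_def v_def by auto
          have "R \<inter> (X' \<times> X') = ordr X' (v w)" unfolding w(2) ordr_def X'_def by auto
          moreover have "inj_on (v w) X'" using w(1) unfolding X'_def by (meson Diff_subset inj_on_subset)
          ultimately have "R \<inter> (X' \<times> X') \<in> Rs'" unfolding Rs'_def realized_def v_def by auto
          thus "R \<in> (\<Union>\<tau>\<in>Rs'. fib \<tau>)" unfolding fib_def using \<open>R \<in> Rs\<close> by blast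
        qed
      qed (auto simp: fib_def)
      have "card Rs = (\<Sum>\<tau>\<in>Rs'. card (fib \<tau>))"
        unfolding U using finRs by (intro card_UN_disjoint) (auto simp: fib_def)
      also have "\<dots> \<le> (\<Sum>\<tau>\<in>Rs'. 1 + card {b \<in> X'. P \<tau> b})"
      proof (rule sum_mono)
        fix \<tau> assume "\<tau> \<in> Rs'"
        thus "card (fib \<tau>) \<le> 1 + card {b \<in> X'. P \<tau> b}"
          using fiber_bound[OF Suc(3) eX, of \<tau> D cst coef]
          unfolding fib_def Rs_def Rs'_def X'_def P_def v_def by simp
      qed
      also have "\<dots> = card Rs' + (\<Sum>\<tau>\<in>Rs'. card {b \<in> X'. P \<tau> b})"
        by (simp add: sum.distrib del: One_nat_def plus_1_eq_Suc)
      also have "(\<Sum>\<tau>\<in>Rs'. card {b \<in> X'. P \<tau> b}) = (\<Sum>b\<in>X'. card {\<tau> \<in> Rs'. P \<tau> b})"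
        using finRs(2) finX' by (rule sum_card_swap)
      also have "\<dots> \<le> (\<Sum>b\<in>X'. Q n d')"
      proof (rule sum_mono)
        fix b assume bX: "b \<in> X'"
        have nc: "\<not> (\<forall>w. v w e = v w b)" using False bX by blast
        show "card {\<tau> \<in> Rs'. P \<tau> b} \<le> Q n d'"
        proof (cases "\<exists>i0\<in>D. coef e i0 \<noteq> coef b i0")
          case True
          then obtain i0 where i0: "i0 \<in> D" "coef e i0 \<noteq> coef b i0" by blast
          obtain cst' coef' where cc: "\<forall>w. val D cst coef e w = val D cst coef b w \<longrightarrow>
            (\<forall>a. val (D - {i0}) cst' coef' a w = val D cst coef a w)"
            using restrict_hyp[where coef=coef and e=e and b=b and cst=cst, OF i0(1) Suc(4) i0(2)] by blast
          have "{\<tau> \<in> Rs'. P \<tau> b} \<subseteq> realized X' (D - {i0}) cst' coef'"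
          proof
            fix \<tau> assume "\<tau> \<in> {\<tau> \<in> Rs'. P \<tau> b}"
            then obtain w where w: "inj_on (v w) X'" "ordr X' (v w) = \<tau>" "v w e = v w b"
              unfolding P_def by blast
            have "(\<lambda>a. val (D - {i0}) cst' coef' a w) = v w"
              using cc w(3) unfolding v_def by auto
            show "\<tau> \<in> realized X' (D - {i0}) cst' coef'" proof -
              have "\<tau> = ordr X' (\<lambda>a. val (D - {i0}) cst' coef' a w) \<and> inj_on (\<lambda>a. val (D - {i0}) cst' coef' a w) X'"
                using w \<open>(\<lambda>a. val (D - {i0}) cst' coef' a w) = v w\<close> by simp
              thus ?thesis unfolding realized_def by blast
            qed
          qed
          hence "card {\<tau> \<in> Rs'. P \<tau> b} \<le> card (realized X' (D - {i0}) cst' coef')"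
            by (intro card_mono realized_finite finX')
          also have "\<dots> \<le> Q (card X') (card (D - {i0}))"
            using Suc(1)[of X' "D - {i0}"] cX' finX' Suc(4) by simp
          also have "\<dots> = Q n d'" using cX' cD i0(1) Suc(4) by simp
          finally show ?thesis .
        next
          case False
          hence "(\<Sum>i\<in>D. coef e i * w i) = (\<Sum>i\<in>D. coef b i * w i)" for w
            by (intro sum.cong) auto
          hence "v w e - v w b = cst e - cst b" for w
            unfolding v_def val_def by simp
          hence "\<forall>w. v w e \<noteq> v w b" using nc by (metis eq_iff_diff_eq_0)
          hence "{\<tau> \<in> Rs'. P \<tau> b} = {}" unfolding P_def by auto
          thus ?thesis by (metis card.empty le0)
        qed
      qed
      also have "\<dots> = n * Q n d'" using cX' by simp
      finally have "card Rs \<le> card Rs' + n * Q n d'" by simp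
      moreover have "card Rs' \<le> Q n (Suc d')"
        using Suc(1)[of X' D cst coef] cX' finX' Suc(4) cD unfolding Rs'_def by simp
      ultimately show ?thesis unfolding Rs_def using Suc(2)[symmetric] cD by simp
    qed
  qed
qed



lemma repr_sub:
  assumes "representable d A S" "S \<subseteq> prefs A"
  shows "\<exists>cst coef. S \<subseteq> realized {1..A} {..<d} cst coef"
proof -
  obtain x :: "nat \<Rightarrow> nat \<Rightarrow> real" and w :: "nat rel \<Rightarrow> nat \<Rightarrow> real" where
    xw: "\<forall>R\<in>S. \<forall>a\<in>{1..A}. \<forall>b\<in>{1..A}. ((a, b) \<in> R \<longleftrightarrow> edist d (x a) (w R) < edist d (x b) (w R))"
    using assms(1) unfolding representable_def by blast
  define cst where "cst = (\<lambda>a. \<Sum>i<d. (x a i)^2)"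
  define coef where "coef = (\<lambda>a i. - 2 * x a i)"
  have key: "edist d (x a) u < edist d (x b) u \<longleftrightarrow> val {..<d} cst coef a u < val {..<d} cst coef b u" for a b u
  proof -
    have e: "(\<Sum>i<d. (x c i - u i)^2) = val {..<d} cst coef c u + (\<Sum>i<d. (u i)^2)" for c
    proof -
      have "(x c i - u i)^2 = (x c i)^2 + (- 2 * x c i) * u i + (u i)^2" for i
        by (simp add: power2_diff algebra_simps)
      hence "(\<Sum>i<d. (x c i - u i)^2) = (\<Sum>i<d. (x c i)^2) + (\<Sum>i<d. (- 2 * x c i) * u i) + (\<Sum>i<d. (u i)^2)"
        by (simp only: sum.distrib)
      thus ?thesis unfolding val_def cst_def coef_def by simp
    qed
    have "edist d (x a) u < edist d (x b) u \<longleftrightarrow> (\<Sum>i<d. (x a i - u i)^2) < (\<Sum>i<d. (x b i - u i)^2)"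
      unfolding edist_def by (simp add: sum_nonneg)
    thus ?thesis unfolding e by simp
  qed
  have "S \<subseteq> realized {1..A} {..<d} cst coef"
  proof
    fix R assume RS: "R \<in> S"
    hence "R \<in> prefs A" using assms(2) by blast
    hence "R \<subseteq> {1..A} \<times> {1..A} \<and> strict_linear_order_on {1..A} R" by (simp only: prefs_def mem_Collect_eq)
    hence Rp: "R \<subseteq> {1..A} \<times> {1..A}" "strict_linear_order_on {1..A} R" by (rule conjunct1, rule conjunct2)
    have iff: "(a,b) \<in> R \<longleftrightarrow> val {..<d} cst coef a (w R) < val {..<d} cst coef b (w R)"
      if "a \<in> {1..A}" "b \<in> {1..A}" for a b using xw[rule_format, OF RS that] unfolding key .
    have "R = ordr {1..A} (\<lambda>a. val {..<d} cst coef a (w R))"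
      unfolding ordr_def using Rp(1) iff by auto
    moreover have "inj_on (\<lambda>a. val {..<d} cst coef a (w R)) {1..A}"
    proof (rule inj_onI, rule ccontr)
      fix a b assume h: "a \<in> {1..A}" "b \<in> {1..A}" "val {..<d} cst coef a (w R) = val {..<d} cst coef b (w R)" "a \<noteq> b"
      hence "(a,b) \<in> R \<or> (b,a) \<in> R" using Rp(2) unfolding strict_linear_order_on_def total_on_def by blast
      thus False using iff[of a b] iff[of b a] h by auto
    qed
    ultimately show "R \<in> realized {1..A} {..<d} cst coef" unfolding realized_def by blast
  qed
  thus ?thesis by blast
qed

lemma repr_card:
  assumes "representable d A S" "S \<subseteq> prefs A"
  shows "card S \<le> Q A d"
proof -
  obtain cst coef where "S \<subseteq> realized {1..A} {..<d} cst coef" using repr_sub[OF assms] by blast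
  hence "card S \<le> card (realized {1..A} {..<d} cst coef)" by (intro card_mono realized_finite) auto
  also have "\<dots> \<le> Q A d" using main_bound[of "{1..A}" "{..<d}" cst coef] by simp
  finally show ?thesis .
qed

lemma Q_fact: "n \<le> d + 1 \<Longrightarrow> Q n d = fact n"
proof (induction n d rule: Q.induct)
  case (3 n d)
  thus ?case by (simp add: algebra_simps)
qed auto

lemma pow_ineq: "(k + D + 1) * D^k \<le> (D + 1)^(k + 1::nat)"
proof (induction k)
  case (Suc k)
  have "(Suc k + D + 1) * D^(Suc k) = D * ((k + D + 1) * D^k) + D^(Suc k)" by (simp add: algebra_simps)
  also have "\<dots> \<le> D * (D+1)^(k+1) + (D+1)^(k+1)"
  proof -
    have "D^(Suc k) \<le> (D+1)^(Suc k)" by (rule power_mono) auto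
    hence "D^(Suc k) \<le> (D+1)^(k+1)" by simp
    thus ?thesis using Suc by (intro add_mono mult_left_mono) auto
  qed
  also have "\<dots> = (D+1)^(Suc k + 1)" by (simp add: algebra_simps)
  finally show ?case .
qed simp

lemma Q_bound: "d + 1 \<le> A \<Longrightarrow> Q A d \<le> (d+1)^(A-d-1) * fact (d+1)"
proof (induction A arbitrary: d)
  case 0 thus ?case by simp
next
  case (Suc n)
  show ?case
  proof (cases "Suc n = d + 1")
    case True thus ?thesis using Q_fact[of "Suc n" d] by simp
  next
    case False
    hence nd: "d + 1 \<le> n" using Suc(2) by simp
    show ?thesis
    proof (cases d)
      case 0 thus ?thesis by simp
    next
      case (Suc d')
      define k where "k = n - d' - 2"
      have nk: "n = k + d' + 2" using nd Suc unfolding k_def by simp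
      have i1: "Q n (Suc d') \<le> (d'+2)^k * fact (d'+2)" using Suc.IH[of "Suc d'"] nd Suc nk
        by (simp add: numeral_2_eq_2)
      have i2: "Q n d' \<le> (d'+1)^(k+1) * fact (d'+1)" using Suc.IH[of d'] nd Suc nk by simp
      have pw: "n * (d'+1)^k \<le> (d'+2)^(k+1)" using pow_ineq[of k "d'+1"] nk by (simp add: algebra_simps)
      have t2: "n * Q n d' \<le> (d'+2)^(k+1) * ((d'+1) * fact (d'+1))"
      proof -
        have "n * Q n d' \<le> n * ((d'+1)^(k+1) * fact (d'+1))" using i2 by simp
        also have "\<dots> = (n * (d'+1)^k) * ((d'+1) * fact (d'+1))" by (simp add: algebra_simps)
        also have "\<dots> \<le> (d'+2)^(k+1) * ((d'+1) * fact (d'+1))" using pw by (intro mult_right_mono) auto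
        finally show ?thesis .
      qed
      have "Q (Suc n) d = Q n (Suc d') + n * Q n d'" using Suc by simp
      also have "\<dots> \<le> (d'+2)^k * fact (d'+2) + (d'+2)^(k+1) * ((d'+1) * fact (d'+1))"
        using i1 t2 by (rule add_mono)
      also have "(d'+2)^k * fact (d'+2) + (d'+2)^(k+1) * ((d'+1) * fact (d'+1)) = (d'+2)^(k+1) * fact (d'+2)"
        by (simp add: algebra_simps fact_Suc numeral_2_eq_2)
      also have "\<dots> = (d+1)^(Suc n - d - 1) * fact (d+1)" using Suc nk by (simp add: numeral_2_eq_2)
      finally show ?thesis .
    qed
  qed
qed



lemma prefs_finite: "finite (prefs A)"
proof -
  have "prefs A \<subseteq> Pow ({1..A} \<times> {1..A})" unfolding prefs_def by auto
  thus ?thesis by (rule finite_subset) auto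
qed

lemma pos_lt:
  assumes "R \<in> prefs A" "a \<in> {1..A}" "b \<in> {1..A}" "(a,b) \<in> R"
  shows "position R a < position R b"
proof -
  have R: "R \<subseteq> {1..A} \<times> {1..A}" "trans R" "irrefl R" using assms(1) unfolding prefs_def strict_linear_order_on_def by auto
  have s1: "{c. (c,a) \<in> R} \<subseteq> {c. (c,b) \<in> R}"
  proof
    fix c assume "c \<in> {c. (c,a) \<in> R}"
    hence "(c,a) \<in> R" by simp
    thus "c \<in> {c. (c,b) \<in> R}" using R(2) assms(4) transD by fastforce
  qed
  have "(a,a) \<notin> R" using R(3) unfolding irrefl_def by blast
  hence s2: "a \<in> {c. (c,b) \<in> R} - {c. (c,a) \<in> R}" using assms(4) by simp
  have fin: "finite {c. (c,b) \<in> R}"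
  proof (rule finite_subset)
    show "{c. (c,b) \<in> R} \<subseteq> {1..A}" using R(1) by blast
  qed simp
  have "{c. (c,a) \<in> R} \<subset> {c. (c,b) \<in> R}" using s1 s2 by blast
  hence "card {c. (c,a) \<in> R} < card {c. (c,b) \<in> R}" using fin by (simp add: psubset_card_mono)
  thus ?thesis unfolding position_def by simp
qed

lemma pos_range:
  assumes "R \<in> prefs A" "a \<in> {1..A}"
  shows "position R a \<in> {1..A}"
proof -
  have R: "R \<subseteq> {1..A} \<times> {1..A}" "irrefl R" using assms(1) unfolding prefs_def strict_linear_order_on_def by auto
  have "{c. (c,a) \<in> R} \<subseteq> {1..A} - {a}" using R by (auto simp: irrefl_def)
  hence "card {c. (c,a) \<in> R} \<le> card ({1..A} - {a})" by (intro card_mono) auto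
  also have "\<dots> = A - 1" using assms(2) by simp
  finally show ?thesis unfolding position_def using assms(2) by auto
qed

lemma R_eq:
  assumes "R \<in> prefs A"
  shows "R = {(a,b). a \<in> {1..A} \<and> b \<in> {1..A} \<and> position R a < position R b}"
proof -
  have R: "R \<subseteq> {1..A} \<times> {1..A}" "total_on {1..A} R" using assms(1) unfolding prefs_def strict_linear_order_on_def by auto
  show ?thesis
  proof (rule set_eqI, clarify)
    fix a b
    show "((a,b) \<in> R) = ((a,b) \<in> {(a,b). a \<in> {1..A} \<and> b \<in> {1..A} \<and> position R a < position R b})"
    proof
      assume "(a,b) \<in> R" thus "(a,b) \<in> {(a,b). a \<in> {1..A} \<and> b \<in> {1..A} \<and> position R a < position R b}"
        using R(1) pos_lt[OF assms] by blast
    next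
      assume h: "(a,b) \<in> {(a,b). a \<in> {1..A} \<and> b \<in> {1..A} \<and> position R a < position R b}"
      hence "a \<noteq> b" by auto
      hence "(a,b) \<in> R \<or> (b,a) \<in> R" using R(2) h unfolding total_on_def by auto
      thus "(a,b) \<in> R" using pos_lt[OF assms, of b a] h by auto
    qed
  qed
qed

lemma card_prefs_le: "card (prefs A) \<le> fact A"
proof -
  define pi where "pi = (\<lambda>R a. if a \<in> {1..A} then position R a else a)"
  have perm: "pi R permutes {1..A}" if "R \<in> prefs A" for R
  proof (rule bij_imp_permutes)
    have inj: "inj_on (pi R) {1..A}"
    proof (rule inj_onI, rule ccontr)
      fix a b assume h: "a \<in> {1..A}" "b \<in> {1..A}" "pi R a = pi R b" "a \<noteq> b"
      have "(a,b) \<in> R \<or> (b,a) \<in> R" using that h unfolding prefs_def strict_linear_order_on_def total_on_def by auto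
      thus False using pos_lt[OF that, of a b] pos_lt[OF that, of b a] h unfolding pi_def by auto
    qed
    moreover have "pi R ` {1..A} \<subseteq> {1..A}" using pos_range[OF that] unfolding pi_def by auto
    ultimately have "pi R ` {1..A} = {1..A}" by (intro endo_inj_surj) auto
    thus "bij_betw (pi R) {1..A} {1..A}" using inj unfolding bij_betw_def by auto
  qed (auto simp: pi_def)
  have "inj_on pi (prefs A)"
  proof (rule inj_onI)
    fix R1 R2 assume h: "R1 \<in> prefs A" "R2 \<in> prefs A" "pi R1 = pi R2"
    have "\<forall>a\<in>{1..A}. position R1 a = position R2 a" using h(3) unfolding pi_def by (metis)
    hence "{(a,b). a \<in> {1..A} \<and> b \<in> {1..A} \<and> position R1 a < position R1 b}
         = {(a,b). a \<in> {1..A} \<and> b \<in> {1..A} \<and> position R2 a < position R2 b}" by auto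
    thus "R1 = R2" using R_eq[OF h(1)] R_eq[OF h(2)] by simp
  qed
  hence "card (prefs A) \<le> card {p. p permutes {1..A}}"
  proof (rule card_inj_on_le)
    show "pi ` prefs A \<subseteq> {p. p permutes {1..A}}" using perm by blast
    show "finite {p. p permutes {1..A}}" by (rule finite_permutations) simp
  qed
  also have "\<dots> = fact A" by (simp add: card_permutations)
  finally show ?thesis .
qed



fun lrel :: "'a list \<Rightarrow> 'a rel" where
  "lrel [] = {}"
| "lrel (x # xs) = Pair x ` set xs \<union> lrel xs"

fun ins :: "nat \<Rightarrow> 'a \<Rightarrow> 'a list \<Rightarrow> 'a list" where
  "ins 0 x L = x # L"
| "ins (Suc p) x [] = [x]"
| "ins (Suc p) x (y # ys) = y # ins p x ys"

lemma lrel_sub: "lrel L \<subseteq> set L \<times> set L"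
  by (induction L) auto

lemma lrel_irrefl: "distinct L \<Longrightarrow> (a,a) \<notin> lrel L"
  by (induction L) (use lrel_sub in auto)

lemma lrel_trans: "distinct L \<Longrightarrow> (a,b) \<in> lrel L \<Longrightarrow> (b,c) \<in> lrel L \<Longrightarrow> (a,c) \<in> lrel L"
proof (induction L arbitrary: a b c)
  case (Cons x xs)
  show ?case
  proof (cases "(a,b) \<in> lrel xs")
    case True
    hence "b \<in> set xs" using lrel_sub by blast
    hence "b \<noteq> x" using Cons.prems(1) by auto
    hence "(b,c) \<in> lrel xs" using Cons.prems(3) by (simp add: image_iff)
    hence "(a,c) \<in> lrel xs" using Cons.IH[OF _ True] Cons.prems(1) by simp
    thus ?thesis by simp
  next
    case False
    hence "a = x" using Cons.prems(2) by (simp add: image_iff)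
    have "c \<in> set xs" using Cons.prems(3) lrel_sub by auto
    thus ?thesis using \<open>a = x\<close> by simp
  qed
qed simp

lemma lrel_total: "a \<in> set L \<Longrightarrow> b \<in> set L \<Longrightarrow> a \<noteq> b \<Longrightarrow> (a,b) \<in> lrel L \<or> (b,a) \<in> lrel L"
  by (induction L) auto

lemma lrel_prefs: "distinct L \<Longrightarrow> set L = {1..A} \<Longrightarrow> lrel L \<in> prefs A"
  unfolding prefs_def strict_linear_order_on_def
proof (intro CollectI conjI)
  assume d: "distinct L" and s: "set L = {1..A}"
  show "lrel L \<subseteq> {1..A} \<times> {1..A}" using lrel_sub[of L] s by simp
  show "trans (lrel L)" by (rule transI) (erule lrel_trans[OF d], assumption)
  show "irrefl (lrel L)" by (rule irreflI) (rule lrel_irrefl[OF d])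
  show "total_on {1..A} (lrel L)" unfolding total_on_def s[symmetric] using lrel_total[of _ L] by blast
qed

lemma lrel_inj: "distinct L1 \<Longrightarrow> distinct L2 \<Longrightarrow> set L1 = set L2 \<Longrightarrow> lrel L1 = lrel L2 \<Longrightarrow> L1 = L2"
proof (induction L1 arbitrary: L2)
  case Nil
  hence "set L2 = {}" by (metis list.set(1))
  thus ?case by simp
next
  case (Cons x xs)
  have "L2 \<noteq> []" using Cons.prems(3) by (metis list.distinct(1) set_empty)
  then obtain y ys where L2: "L2 = y # ys" by (meson list.exhaust)
  have "x = y"
  proof (rule ccontr)
    assume "x \<noteq> y"
    hence "y \<in> set xs" using Cons.prems(3) L2 by auto
    hence "(x,y) \<in> lrel (x # xs)" by simp
    hence "(x,y) \<in> lrel (y # ys)" using Cons.prems(4) L2 by metis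
    hence "x = y \<or> (x,y) \<in> lrel ys" by auto
    thus False using \<open>x \<noteq> y\<close> lrel_sub[of ys] Cons.prems(2) L2 by auto
  qed
  have s: "set xs = set ys" using Cons.prems(1-3) L2 \<open>x = y\<close> by auto
  have "lrel xs = lrel (x # xs) \<inter> (set xs \<times> set xs)" using lrel_sub[of xs] Cons.prems(1) by auto
  moreover have "lrel ys = lrel (y # ys) \<inter> (set ys \<times> set ys)" using lrel_sub[of ys] Cons.prems(2) L2 by auto
  ultimately have "lrel xs = lrel ys" using Cons.prems(4) L2 s by simp
  hence "xs = ys" using Cons.IH[of ys] Cons.prems(1,2) L2 s by simp
  thus ?case using L2 \<open>x = y\<close> by simp
qed

lemma ins_set: "p \<le> length L \<Longrightarrow> set (ins p x L) = insert x (set L)"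
  by (induction p x L rule: ins.induct) auto

lemma ins_length: "length (ins p x L) = Suc (length L)"
  by (induction p x L rule: ins.induct) auto

lemma ins_distinct: "p \<le> length L \<Longrightarrow> distinct L \<Longrightarrow> x \<notin> set L \<Longrightarrow> distinct (ins p x L)"
  by (induction p x L rule: ins.induct) (auto simp: ins_set)

lemma ins_lrel: "p \<le> length L \<Longrightarrow> lrel L \<subseteq> lrel (ins p x L)"
  by (induction p x L rule: ins.induct) (auto simp: ins_set)

lemma ins_remove: "x \<notin> set L \<Longrightarrow> remove1 x (ins p x L) = L"
  by (induction p x L rule: ins.induct) auto

lemma ins_card: "p \<le> length L \<Longrightarrow> distinct L \<Longrightarrow> x \<notin> set L \<Longrightarrow> card {b. (b,x) \<in> lrel (ins p x L)} = p"
proof (induction p x L rule: ins.induct)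
  case (1 x L)
  have "{b. (b,x) \<in> lrel (x # L)} = {}" using 1 lrel_sub[of L] by auto
  thus ?case by simp
next
  case (3 p x y ys)
  have "{b. (b,x) \<in> lrel (ins (Suc p) x (y # ys))} = insert y {b. (b,x) \<in> lrel (ins p x ys)}"
    using 3 by (auto simp: ins_set)
  moreover have "y \<notin> {b. (b,x) \<in> lrel (ins p x ys)}" using 3 lrel_sub[of "ins p x ys"] by (auto simp: ins_set)
  moreover have "finite {b. (b,x) \<in> lrel (ins p x ys)}"
    using lrel_sub[of "ins p x ys"] by (rule_tac finite_subset[of _ "set (ins p x ys)"]) auto
  ultimately show ?case using 3 by simp
qed simp



fun G :: "nat \<Rightarrow> nat \<Rightarrow> nat \<Rightarrow> nat list set" where
  "G M d 0 = permutations_of_set {M..M+d}"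
| "G M d (Suc j) = (\<lambda>(L,p). ins p (M - Suc j) L) ` (G M d j \<times> {j+1..j+d+1})"

lemma G_inv:
  "j < M \<Longrightarrow> L \<in> G M d j \<Longrightarrow> distinct L \<and> set L = {M-j..M+d} \<and> length L = d+1+j \<and>
     (\<forall>n\<in>{M-j..<M}. M - n \<le> card {b. (b,n) \<in> lrel L})"
proof (induction j arbitrary: L)
  case 0
  hence "L \<in> permutations_of_set {M..M+d}" by simp
  hence "distinct L" "set L = {M..M+d}" unfolding permutations_of_set_def by auto
  moreover have "length L = d + 1" using calculation distinct_card[of L] by simp
  ultimately show ?case by simp
next
  case (Suc j)
  define x where "x = M - Suc j"
  obtain L0 p where Lp: "L = ins p x L0" "L0 \<in> G M d j" "p \<in> {j+1..j+d+1}"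
    using Suc.prems(2) unfolding x_def by auto
  have IH: "distinct L0" "set L0 = {M-j..M+d}" "length L0 = d+1+j"
     "\<forall>n\<in>{M-j..<M}. M - n \<le> card {b. (b,n) \<in> lrel L0}"
    using Suc.IH[OF _ Lp(2)] Suc.prems(1) by auto
  have xn: "x \<notin> set L0" using IH(2) Suc.prems(1) unfolding x_def by auto
  have pl: "p \<le> length L0" using Lp(3) IH(3) by simp
  have d: "distinct L" using ins_distinct[OF pl IH(1) xn] Lp(1) by simp
  have s: "set L = {M - Suc j..M+d}" using ins_set[OF pl] Lp(1) IH(2) Suc.prems(1) unfolding x_def
    by (auto simp: Suc_diff_Suc)
  have l: "length L = d+1+Suc j" unfolding Lp(1) ins_length IH(3) by simp
  have c: "M - n \<le> card {b. (b,n) \<in> lrel L}" if n: "n \<in> {M - Suc j..<M}" for n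
  proof (cases "n = x")
    case True
    have "card {b. (b,n) \<in> lrel L} = p" using ins_card[OF pl IH(1) xn] Lp(1) True by simp
    thus ?thesis using Lp(3) True Suc.prems(1) unfolding x_def by simp
  next
    case False
    hence n2: "n \<in> {M-j..<M}" using n Suc.prems(1) unfolding x_def by auto
    have "{b. (b,n) \<in> lrel L0} \<subseteq> {b. (b,n) \<in> lrel L}" using ins_lrel[OF pl] Lp(1) by blast
    moreover have "finite {b. (b,n) \<in> lrel L}"
      by (rule finite_subset[of _ "set L"]) (use lrel_sub[of L] in auto)
    ultimately have "card {b. (b,n) \<in> lrel L0} \<le> card {b. (b,n) \<in> lrel L}" by (rule card_mono[rotated])
    thus ?thesis using IH(4) n2 by fastforce
  qed
  show ?case using d s l c by blast
qed

lemma G_card: "j < M \<Longrightarrow> finite (G M d j) \<and> card (G M d j) = (d+1)^j * fact (d+1)"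
proof (induction j)
  case 0 thus ?case by simp
next
  case (Suc j)
  define x where "x = M - Suc j"
  have IH: "finite (G M d j)" "card (G M d j) = (d+1)^j * fact (d+1)" using Suc by auto
  have inj: "inj_on (\<lambda>(L,p). ins p x L) (G M d j \<times> {j+1..j+d+1})"
  proof (rule inj_onI, clarify)
    fix L1 p1 L2 p2
    assume h: "L1 \<in> G M d j" "p1 \<in> {j+1..j+d+1}" "L2 \<in> G M d j" "p2 \<in> {j+1..j+d+1}"
      "ins p1 x L1 = ins p2 x L2"
    have I1: "distinct L1" "set L1 = {M-j..M+d}" "length L1 = d+1+j" using G_inv[OF _ h(1)] Suc.prems by auto
    have I2: "distinct L2" "set L2 = {M-j..M+d}" "length L2 = d+1+j" using G_inv[OF _ h(3)] Suc.prems by auto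
    have xn: "x \<notin> set L1" "x \<notin> set L2" using I1(2) I2(2) Suc.prems unfolding x_def by auto
    have "p1 = card {b. (b,x) \<in> lrel (ins p1 x L1)}" using ins_card[of p1 L1 x] I1 xn h(2) by simp
    also have "\<dots> = p2" using ins_card[of p2 L2 x] I2 xn h(4,5) by simp
    finally have "p1 = p2" .
    moreover have "L1 = L2" using ins_remove[OF xn(1), of p1] ins_remove[OF xn(2), of p2] h(5) by simp
    ultimately show "L1 = L2 \<and> p1 = p2" by simp
  qed
  have "G M d (Suc j) = (\<lambda>(L,p). ins p x L) ` (G M d j \<times> {j+1..j+d+1})" unfolding x_def by simp
  hence "card (G M d (Suc j)) = card (G M d j \<times> {j+1..j+d+1})" using inj by (simp add: card_image)
  also have "\<dots> = (d+1)^(Suc j) * fact (d+1)" using IH by (simp add: card_cartesian_product algebra_simps)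
  finally show ?case using IH(1) \<open>G M d (Suc j) = _\<close> by simp
qed

lemma lower_count:
  assumes "d < A - 1"
  shows "(d+1)^(A-d-1) * fact (d+1) \<le> card (prefs A - event_C A d)"
proof -
  define M where "M = A - d"
  have M2: "2 \<le> M" and AM: "A = M + d" using assms unfolding M_def by auto
  define j where "j = M - 1"
  have jM: "j < M" using M2 unfolding j_def by simp
  have sub: "lrel ` G M d j \<subseteq> prefs A - event_C A d"
  proof
    fix R assume "R \<in> lrel ` G M d j"
    then obtain L where L: "R = lrel L" "L \<in> G M d j" by blast
    have I: "distinct L" "set L = {1..A}" "\<forall>n\<in>{1..<M}. M - n \<le> card {b. (b,n) \<in> lrel L}"
      using G_inv[OF jM L(2)] M2 AM unfolding j_def by auto
    have "R \<in> prefs A" using lrel_prefs[OF I(1,2)] L(1) by simp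
    moreover have "R \<notin> event_C A d"
    proof
      assume "R \<in> event_C A d"
      then obtain n where n: "n \<in> {1..A - d - 1}" "position R n \<le> (A - d) - n" unfolding event_C_def by blast
      have "n \<in> {1..<M}" using n(1) M2 unfolding M_def by auto
      hence "M - n \<le> card {b. (b,n) \<in> R}" using I(3) L(1) by simp
      thus False using n(2) unfolding position_def M_def by simp
    qed
    ultimately show "R \<in> prefs A - event_C A d" by simp
  qed
  have inj: "inj_on lrel (G M d j)"
  proof (rule inj_onI)
    fix L1 L2 assume h: "L1 \<in> G M d j" "L2 \<in> G M d j" "lrel L1 = lrel L2"
    show "L1 = L2" using lrel_inj[OF _ _ _ h(3)] G_inv[OF jM h(1)] G_inv[OF jM h(2)] by simp
  qed
  have "card (lrel ` G M d j) = (d+1)^(A-d-1) * fact (d+1)"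
    using G_card[OF jM] inj card_image unfolding j_def M_def by fastforce
  moreover have "card (lrel ` G M d j) \<le> card (prefs A - event_C A d)"
    using sub prefs_finite by (intro card_mono) auto
  ultimately show ?thesis by simp
qed



lemma final_ineq:
  fixes p c F :: real
  assumes "0 < p" "p \<le> F" "c \<le> p" "0 \<le> c"
  shows "p - c \<le> (1 - c / p) * F"
proof -
  have "(1 - c / p) * F = (p - c) * (F / p)" using assms by (simp add: field_simps)
  moreover have "F / p \<ge> 1" using assms by simp
  moreover have "p - c \<ge> 0" using assms by simp
  ultimately show ?thesis by (metis mult.right_neutral mult_left_mono)
qed

lemma prob_part:
  assumes "d < A - 1" "real K \<le> real (card (prefs A - event_C A d))"
  shows "real K \<le> (1 - measure_pmf.prob (pmf_of_set (prefs A)) (event_C A d)) * fact A"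
proof -
  define P where "P = prefs A"
  define C where "C = event_C A d"
  have finP: "finite P" unfolding P_def by (rule prefs_finite)
  have pos: "0 < card (P - C)"
    using lower_count[OF assms(1)] unfolding P_def C_def by (metis fact_gt_zero le_0_eq mult_is_0 neq0_conv power_not_zero Suc_eq_plus1 nat.simps(3))
  hence Pne: "P \<noteq> {}" by auto
  have pr: "measure_pmf.prob (pmf_of_set P) C = card (P \<inter> C) / card P"
    using measure_pmf_of_set[OF Pne finP] by simp
  have cd: "card (P - C) = card P - card (P \<inter> C)" using finP by (metis card_Diff_subset_Int finite_Int)
  have le: "card (P \<inter> C) \<le> card P" using finP by (intro card_mono) auto
  have "real (card (P - C)) = real (card P) - real (card (P \<inter> C))" using cd le by simp
  also have "\<dots> \<le> (1 - real (card (P \<inter> C)) / real (card P)) * fact A"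
  proof (rule final_ineq)
    show "0 < real (card P)" using Pne finP by (simp add: card_gt_0_iff)
    show "real (card P) \<le> fact A" using card_prefs_le[of A] unfolding P_def by (metis of_nat_fact of_nat_le_iff)
    show "real (card (P \<inter> C)) \<le> real (card P)" using le by simp
  qed simp
  finally show ?thesis using assms(2) pr unfolding P_def C_def by simp
qed


theorem lemma1:
  fixes A d :: nat and I :: "'i set" and p :: "'i \<Rightarrow> nat rel"
  assumes "0 < A" and "0 < d" and "d < A - 1"
    and "finite I" and "p ` I \<subseteq> prefs A"
    and "card (p ` I) \<ge> max_repr d A"
  shows "real (max_repr d A)
           \<le> (1 - measure_pmf.prob (pmf_of_set (prefs A)) (event_C A d)) * fact A"
proof -
  define Cs where "Cs = {card S | S. S \<subseteq> prefs A \<and> representable d A S}"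
  have "Cs \<subseteq> card ` Pow (prefs A)" unfolding Cs_def by auto
  hence finC: "finite Cs" using prefs_finite by (meson finite_Pow_iff finite_imageI finite_subset)
  have "representable d A {}" unfolding representable_def by simp
  hence "card ({}::nat rel set) \<in> Cs" unfolding Cs_def by blast
  hence "Cs \<noteq> {}" by blast
  hence "Max Cs \<in> Cs" using finC by (rule Max_in[rotated])
  then obtain S where S: "max_repr d A = card S" "S \<subseteq> prefs A" "representable d A S"
    unfolding max_repr_def Cs_def[symmetric] by (auto simp: Cs_def)
  have "card S \<le> Q A d" by (rule repr_card[OF S(3,2)])
  also have "\<dots> \<le> (d+1)^(A-d-1) * fact (d+1)" using assms(3) by (intro Q_bound) simp
  also have "\<dots> \<le> card (prefs A - event_C A d)" using lower_count[OF assms(3)] .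
  finally have "real (max_repr d A) \<le> real (card (prefs A - event_C A d))" using S(1) by simp
  thus ?thesis by (rule prob_part[OF assms(3)])
qed

end
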